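(* Let $p\ge 2$ and let $\alpha,\beta>0$ be reals with $$\alpha\beta\ <\ \frac{2p}{\lceil \log_2 p\rceil+2}.$$ Then there exists an in-tree task graph $T$ in the Pebble Game model such that no schedule $S$ of $T$ on $p$ processors satisfies both $C_{\max}(S)\le\alpha\,C^*_p(T)$ and $M(S)\le \beta\, M^*_p(T)$. Consequently, no algorithm is both an $\alpha(p)$-approximation for makespan minimization and a $\beta(p)$-approximation for peak memory minimization on $p$ processors with $\alpha(p)\beta(p)<2p/(\lceil\log_2 p\rceil+2)$.
   Context: Model. An in-tree task graph $T$ has nodes $\{1,\dots,n\}$ and a root; every non-root node $i$ has a parent, and $\mathrm{Children}(i)$ is the set of children of $i$. Each node $i$ has a processing time $w_i\ge 0$, an execution-file size $n_i\ge 0$ and an output-file size $f_i\ge 0$. A schedule on $p$ identical processors assigns each node $i$ a processor and a start time $\sigma_i\ge 0$; node $i$ runs without preemption during $[\sigma_i,\sigma_i+w_i)$, a processor runs at most one node at a time, and a node may start only after all its children have completed. The makespan is $C_{\max}=\max_i(\sigma_i+w_i)$. Memory: the output file of $i$ (size $f_i$) occupies memory from the start of $i$ until the completion of the parent of $i$ (for the root, until the end of the schedule), and the execution file of $i$ occupies memory while $i$ runs. The memory used at time $t$ is the total size of files present at time $t$; the peak memory $M(S)$ is the supremum over $t$ of the memory used. $C^*_p(T)$ denotes the minimum makespan and $M^*_p(T)$ the minimum peak memory over all schedules of $T$ on $p$ processors. The Pebble Game model is the special case $f_i=1$, $w_i=1$, $n_i=0$ for all $i$. *)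

theory Defs
  imports Complex_Main
begin

text \<open>In-tree task graphs. Nodes are 1..n, r is the root, par gives the parent of every
non-root node. Every node reaches the root by following parents.\<close>

definition in_tree :: "nat \<Rightarrow> nat \<Rightarrow> (nat \<Rightarrow> nat) \<Rightarrow> bool" where
  "in_tree n r par \<longleftrightarrow> r \<in> {1..n} \<and> (\<forall>i\<in>{1..n} - {r}. par i \<in> {1..n})
      \<and> (\<forall>i\<in>{1..n}. \<exists>k. (par ^^ k) i = r)"

definition children :: "nat \<Rightarrow> nat \<Rightarrow> (nat \<Rightarrow> nat) \<Rightarrow> nat \<Rightarrow> nat set" where
  "children n r par i = {j \<in> {1..n}. j \<noteq> r \<and> par j = i}"

definition valid_schedule ::
  "nat \<Rightarrow> nat \<Rightarrow> (nat \<Rightarrow> nat) \<Rightarrow> (nat \<Rightarrow> real) \<Rightarrow> nat \<Rightarrow> (nat \<Rightarrow> nat) \<Rightarrow> (nat \<Rightarrow> real) \<Rightarrow> bool" where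
  "valid_schedule n r par w p proc \<sigma> \<longleftrightarrow>
     (\<forall>i\<in>{1..n}. 0 \<le> \<sigma> i \<and> proc i < p)
   \<and> (\<forall>i\<in>{1..n}. \<forall>j\<in>{1..n}. i \<noteq> j \<and> proc i = proc j \<longrightarrow>
        {\<sigma> i..<\<sigma> i + w i} \<inter> {\<sigma> j..<\<sigma> j + w j} = {})
   \<and> (\<forall>i\<in>{1..n}. \<forall>j\<in>children n r par i. \<sigma> j + w j \<le> \<sigma> i)"

definition makespan :: "nat \<Rightarrow> (nat \<Rightarrow> real) \<Rightarrow> (nat \<Rightarrow> real) \<Rightarrow> real" where
  "makespan n w \<sigma> = Max ((\<lambda>i. \<sigma> i + w i) ` {1..n})"

text \<open>End of the lifetime of the output file of node i.\<close>
definition file_end :: "nat \<Rightarrow> nat \<Rightarrow> (nat \<Rightarrow> nat) \<Rightarrow> (nat \<Rightarrow> real) \<Rightarrow> (nat \<Rightarrow> real) \<Rightarrow> nat \<Rightarrow> real" where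
  "file_end n r par w \<sigma> i = (if i = r then makespan n w \<sigma> else \<sigma> (par i) + w (par i))"

text \<open>Memory used at time t (w: processing times, ne: execution file sizes, f: output file sizes).\<close>
definition mem_at :: "nat \<Rightarrow> nat \<Rightarrow> (nat \<Rightarrow> nat) \<Rightarrow> (nat \<Rightarrow> real) \<Rightarrow> (nat \<Rightarrow> real) \<Rightarrow> (nat \<Rightarrow> real)
    \<Rightarrow> (nat \<Rightarrow> real) \<Rightarrow> real \<Rightarrow> real" where
  "mem_at n r par w ne f \<sigma> t =
     (\<Sum>i\<in>{1..n}. (if \<sigma> i \<le> t \<and> t < file_end n r par w \<sigma> i then f i else 0)
                 + (if \<sigma> i \<le> t \<and> t < \<sigma> i + w i then ne i else 0))"

definition peak_mem :: "nat \<Rightarrow> nat \<Rightarrow> (nat \<Rightarrow> nat) \<Rightarrow> (nat \<Rightarrow> real) \<Rightarrow> (nat \<Rightarrow> real) \<Rightarrow> (nat \<Rightarrow> real)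
    \<Rightarrow> (nat \<Rightarrow> real) \<Rightarrow> real" where
  "peak_mem n r par w ne f \<sigma> = (SUP t. mem_at n r par w ne f \<sigma> t)"

definition opt_makespan :: "nat \<Rightarrow> nat \<Rightarrow> (nat \<Rightarrow> nat) \<Rightarrow> (nat \<Rightarrow> real) \<Rightarrow> nat \<Rightarrow> real" where
  "opt_makespan n r par w p =
     Inf {makespan n w \<sigma> | proc \<sigma>. valid_schedule n r par w p proc \<sigma>}"

definition opt_peak_mem :: "nat \<Rightarrow> nat \<Rightarrow> (nat \<Rightarrow> nat) \<Rightarrow> (nat \<Rightarrow> real) \<Rightarrow> (nat \<Rightarrow> real) \<Rightarrow> (nat \<Rightarrow> real)
    \<Rightarrow> nat \<Rightarrow> real" where
  "opt_peak_mem n r par w ne f p =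
     Inf {peak_mem n r par w ne f \<sigma> | proc \<sigma>. valid_schedule n r par w p proc \<sigma>}"

end

theory Submission
  imports Defs "HOL-Analysis.Analysis"
begin

lemma avg:
  fixes a b :: "nat \<Rightarrow> real"
  assumes "finite I" "\<And>i. i\<in>I \<Longrightarrow> 0 \<le> a i \<and> a i \<le> b i \<and> b i \<le> C"
    "\<And>t. (\<Sum>i\<in>I. indicator {a i..<b i} t) \<le> M" "0 \<le> C"
  shows "(\<Sum>i\<in>I. b i - a i) \<le> M * C"
proof -
  have int: "\<And>i. integrable lborel (\<lambda>t. indicator {a i..<b i} t :: real)"
  proof (rule integrable_real_indicator)
    fix i show "{a i..<b i} \<in> sets lborel" by simp
    show "emeasure lborel {a i..<b i} < \<infinity>"
      by (cases "a i \<le> b i") auto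
  qed
  have int2: "integrable lborel (\<lambda>t. M * indicator {0..C} t :: real)"
    using assms(4) by (intro integrable_mult_right integrable_real_indicator) auto
  have "(\<Sum>i\<in>I. b i - a i) = (\<Sum>i\<in>I. integral\<^sup>L lborel (\<lambda>t. indicator {a i..<b i} t :: real))"
  proof (rule sum.cong)
    fix i assume "i \<in> I"
    hence "a i \<le> b i" using assms(2) by blast
    thus "b i - a i = integral\<^sup>L lborel (\<lambda>t. indicator {a i..<b i} t :: real)"
      by simp
  qed simp
  also have "\<dots> = integral\<^sup>L lborel (\<lambda>t. \<Sum>i\<in>I. indicator {a i..<b i} t :: real)"
    using Bochner_Integration.integral_sum[where I=I and M=lborel and f="\<lambda>i. indicator {a i..<b i}", OF int] by simp
  also have "\<dots> \<le> integral\<^sup>L lborel (\<lambda>t. M * indicator {0..C} t :: real)"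
  proof (rule Bochner_Integration.integral_mono)
    show "integrable lborel (\<lambda>t. \<Sum>i\<in>I. indicator {a i..<b i} t :: real)"
      using Bochner_Integration.integrable_sum[where I=I and M=lborel and f="\<lambda>i. indicator {a i..<b i}", OF int] by simp
    show "integrable lborel (\<lambda>t. M * indicator {0..C} t :: real)" by (rule int2)
    fix t :: real
    show "(\<Sum>i\<in>I. indicator {a i..<b i} t) \<le> M * indicator {0..C} t"
    proof (cases "t \<in> {0..C}")
      case True thus ?thesis using assms(3)[of t] by simp
    next
      case False
      hence "\<forall>i\<in>I. indicator {a i..<b i} t = (0::real)" using assms(2) by (force simp: indicator_def)
      thus ?thesis using False by simp
    qed
  qed
  also have "\<dots> = M * C" using assms(4) by simp
  finally show ?thesis .
qed

lemma lower:
  assumes T: "in_tree n r par" and V: "valid_schedule n r par (\<lambda>_. 1) p proc \<sigma>"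
  shows "2 * real n - 1 \<le> peak_mem n r par (\<lambda>_. 1) (\<lambda>_. 0) (\<lambda>_. 1) \<sigma> * makespan n (\<lambda>_. 1) \<sigma>"
    and "0 \<le> makespan n (\<lambda>_. 1) \<sigma>" and "0 \<le> peak_mem n r par (\<lambda>_. 1) (\<lambda>_. 0) (\<lambda>_. 1) \<sigma>"
proof -
  have r: "r \<in> {1..n}" using T by (simp add: in_tree_def)
  define C where "C = makespan n (\<lambda>_. 1) \<sigma>"
  have Cge: "\<And>i. i\<in>{1..n} \<Longrightarrow> \<sigma> i + 1 \<le> C" unfolding C_def makespan_def by (intro Max_ge) auto
  have s0: "\<And>i. i\<in>{1..n} \<Longrightarrow> 0 \<le> \<sigma> i" using V by (simp add: valid_schedule_def)
  have C0: "0 \<le> C" using Cge[OF r] s0[OF r] by simp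
  define e where "e = file_end n r par (\<lambda>_. 1) \<sigma>"
  have prec: "par i \<in> {1..n} \<and> \<sigma> i + 1 \<le> \<sigma> (par i)" if "i\<in>{1..n}" "i \<noteq> r" for i
  proof -
    have pi: "par i \<in> {1..n}" using T that by (simp add: in_tree_def)
    have "i \<in> children n r par (par i)" using that by (simp add: children_def)
    hence "\<sigma> i + 1 \<le> \<sigma> (par i)" using V pi by (simp add: valid_schedule_def)
    thus ?thesis using pi by simp
  qed
  have e_le: "e i \<le> C" if "i\<in>{1..n}" for i
  proof (cases "i = r")
    case True thus ?thesis by (simp add: e_def file_end_def C_def)
  next
    case False thus ?thesis using prec[OF that False] Cge[of "par i"] by (simp add: e_def file_end_def)
  qed
  have e_ge: "\<sigma> i + (if i = r then 1 else 2) \<le> e i" if "i\<in>{1..n}" for i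
  proof (cases "i = r")
    case True thus ?thesis using Cge[OF that] by (simp add: e_def file_end_def C_def)
  next
    case False thus ?thesis using prec[OF that False] by (simp add: e_def file_end_def)
  qed
  define M where "M = peak_mem n r par (\<lambda>_. 1) (\<lambda>_. 0) (\<lambda>_. 1) \<sigma>"
  have mem_eq: "mem_at n r par (\<lambda>_. 1) (\<lambda>_. 0) (\<lambda>_. 1) \<sigma> t = (\<Sum>i\<in>{1..n}. indicator {\<sigma> i..<e i} t)" for t
    unfolding mem_at_def e_def by (intro sum.cong) (auto simp: indicator_def)
  have ind1: "indicator A t \<le> (1::real)" for A and t :: real by (simp add: indicator_def)
  have "(\<Sum>i\<in>{1..n}. indicator {\<sigma> i..<e i} t) \<le> (\<Sum>i\<in>{1..n}. (1::real))" for t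
    by (rule sum_mono) (rule ind1)
  hence bdd: "bdd_above (range (mem_at n r par (\<lambda>_. 1) (\<lambda>_. 0) (\<lambda>_. 1) \<sigma>))"
    unfolding mem_eq by (intro bdd_aboveI2) 
  have mem_le: "(\<Sum>i\<in>{1..n}. indicator {\<sigma> i..<e i} t) \<le> M" for t
    using cSUP_upper[OF UNIV_I bdd, of t] mem_eq[of t] unfolding M_def peak_mem_def by simp
  have "(\<Sum>i\<in>{1..n}. e i - \<sigma> i) \<le> M * C"
  proof (rule avg)
    fix i assume "i \<in> {1..n}" thus "0 \<le> \<sigma> i \<and> \<sigma> i \<le> e i \<and> e i \<le> C"
      using s0 e_ge[of i] e_le[of i] by (auto split: if_splits)
  qed (use mem_le C0 in blast)+
  moreover have "(\<Sum>i\<in>{1..n}. (if i = r then 1 else 2)) \<le> (\<Sum>i\<in>{1..n}. e i - \<sigma> i)"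
    by (rule sum_mono) (use e_ge in force)
  moreover have "(\<Sum>i\<in>{1..n}. (if i = r then 1 else 2 :: real)) = 2 * real n - 1"
  proof -
    have "(\<Sum>i\<in>{1..n}. (if i = r then 1 else 2 :: real)) = (\<Sum>i\<in>{1..n}. 2 - (if i = r then 1 else 0))"
      by (intro sum.cong) auto
    also have "\<dots> = 2 * real n - 1" using r by (simp add: sum_subtractf)
    finally show ?thesis .
  qed
  ultimately show "2 * real n - 1 \<le> peak_mem n r par (\<lambda>_. 1) (\<lambda>_. 0) (\<lambda>_. 1) \<sigma> * makespan n (\<lambda>_. 1) \<sigma>"
    unfolding M_def C_def by linarith
  show "0 \<le> makespan n (\<lambda>_. 1) \<sigma>" using C0 C_def by simp
  have "0 \<le> (\<Sum>i\<in>{1..n}. indicator {\<sigma> i..<e i} (0::real) :: real)" by (rule sum_nonneg) simp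
  thus "0 \<le> peak_mem n r par (\<lambda>_. 1) (\<lambda>_. 0) (\<lambda>_. 1) \<sigma>" using mem_le[of 0] M_def by simp
qed


definition cpar :: "nat \<Rightarrow> nat \<Rightarrow> nat" where
  "cpar K i = (if K dvd i then i + K else i + 1)"

lemma decomp:
  fixes i p K :: nat
  assumes "i \<in> {1..p*K}" "0 < K"
  obtains b j where "b < p" "j < K" "i = b*K + j + 1"
proof -
  have "i - 1 < p * K" using assms by auto
  hence "(i-1) div K < p" using assms(2) by (simp add: div_less_iff_less_mult)
  moreover have "(i-1) mod K < K" using assms(2) by simp
  moreover have "i - 1 = ((i-1) div K)*K + (i-1) mod K" by simp
  hence "i = ((i-1) div K)*K + (i-1) mod K + 1" using assms(1) by simp
  ultimately show ?thesis using that by blast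
qed

lemma dvd_decomp:
  fixes K b j :: nat
  assumes "j < K"
  shows "K dvd (b*K + j + 1) \<longleftrightarrow> j + 1 = K"
proof -
  have "b*K + j + 1 = (j + 1) + b*K" by simp
  hence "K dvd (b*K + j + 1) \<longleftrightarrow> K dvd (j + 1)"
    using dvd_add_times_triv_right_iff[of K "j+1" b] by (simp add: add.commute)
  also have "\<dots> \<longleftrightarrow> j + 1 = K" using assms
    by (auto dest: dvd_imp_le)
  finally show ?thesis .
qed

lemma cpar_le:
  fixes K i p :: nat
  assumes "0 < K" "i \<in> {1..p*K}" "i \<noteq> p*K"
  shows "cpar K i \<le> p*K"
proof (cases "K dvd i")
  case True
  then obtain c where c: "i = K*c" by blast
  with assms have "K*c < K*p" by (simp add: mult.commute)
  hence "c < p" by simp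
  hence "Suc c \<le> p" by simp
  hence "K * Suc c \<le> K * p" by (rule mult_le_mono2)
  hence "i + K \<le> p * K" using c by (simp add: mult.commute)
  thus ?thesis using True by (simp add: cpar_def)
next
  case False
  have "i < p*K" using assms by auto
  hence "i + 1 \<le> p*K" by simp
  thus ?thesis using False by (simp add: cpar_def)
qed

lemma cpar_gt: "0 < K \<Longrightarrow> i < cpar K i"
  by (simp add: cpar_def)

lemma tree_ok:
  assumes "0 < K" "0 < p"
  shows "in_tree (p*K) (p*K) (cpar K)"
proof -
  let ?n = "p*K"
  have reach: "\<forall>i. n' = ?n - i \<longrightarrow> i \<in> {1..?n} \<longrightarrow> (\<exists>k. (cpar K ^^ k) i = ?n)" for n'
  proof (induction n' rule: less_induct)
    case (less d)
    show ?case
    proof (intro allI impI)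
      fix i assume d: "d = ?n - i" and i: "i \<in> {1..?n}"
      show "\<exists>k. (cpar K ^^ k) i = ?n"
      proof (cases "i = ?n")
        case True thus ?thesis by (metis funpow_0)
      next
        case False
        have "cpar K i \<in> {1..?n}" using cpar_le[OF assms(1) i False] cpar_gt[OF assms(1), of i] i by auto
        moreover have "?n - cpar K i < d" using cpar_gt[OF assms(1), of i] d i False by auto
        ultimately obtain k where "(cpar K ^^ k) (cpar K i) = ?n" using less by blast
        hence "(cpar K ^^ Suc k) i = ?n" by (simp only: funpow_Suc_right comp_def)
        thus ?thesis by blast
      qed
    qed
  qed
  have "?n \<in> {1..?n}" using assms by simp
  moreover have "\<forall>i\<in>{1..?n} - {?n}. cpar K i \<in> {1..?n}"
  proof
    fix i assume i: "i \<in> {1..?n} - {?n}"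
    thus "cpar K i \<in> {1..?n}" using cpar_le[OF assms(1), of i p] cpar_gt[OF assms(1), of i] by auto
  qed
  ultimately show ?thesis unfolding in_tree_def using reach by blast
qed

lemma valid_intro:
  assumes "\<And>i. i\<in>{1..n} \<Longrightarrow> 0 \<le> \<sigma> i \<and> proc i < p"
    "\<And>i j. i\<in>{1..n} \<Longrightarrow> j\<in>{1..n} \<Longrightarrow> i\<noteq>j \<Longrightarrow> proc i = proc j \<Longrightarrow> \<sigma> i + 1 \<le> \<sigma> j \<or> \<sigma> j + 1 \<le> \<sigma> i"
    "\<And>c. c\<in>{1..n} \<Longrightarrow> c \<noteq> r \<Longrightarrow> \<sigma> c + 1 \<le> \<sigma> (par c)"
  shows "valid_schedule n r par (\<lambda>_. 1) p proc \<sigma>"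
  unfolding valid_schedule_def
proof (intro conjI ballI impI)
  fix i assume "i \<in> {1..n}" thus "0 \<le> \<sigma> i" "proc i < p" using assms(1) by auto
next
  fix i j assume "i \<in> {1..n}" "j \<in> {1..n}" "i \<noteq> j \<and> proc i = proc j"
  hence "\<sigma> i + 1 \<le> \<sigma> j \<or> \<sigma> j + 1 \<le> \<sigma> i" using assms(2) by blast
  thus "{\<sigma> i..<\<sigma> i + 1} \<inter> {\<sigma> j..<\<sigma> j + 1} = {}" by auto
next
  fix i j assume "i \<in> {1..n}" "j \<in> children n r par i"
  thus "\<sigma> j + 1 \<le> \<sigma> i" using assms(3) by (auto simp: children_def)
qed




lemma card3:
  fixes K n :: nat and t :: real
  assumes "0 < K"
  shows "card {i\<in>{1..n}. real i - 1 \<le> t \<and> (t < real i + 1 \<or> (K dvd i \<and> t < real i + real K))} \<le> 3"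
    (is "card ?B \<le> 3")
proof (cases "t < 0")
  case True
  hence e: "?B = {}" by auto
  show ?thesis unfolding e by simp
next
  case False
  define m where "m = nat \<lfloor>t\<rfloor>"
  have m1: "real m \<le> t" "t < real m + 1" using False unfolding m_def by linarith+
  define S where "S = {i\<in>?B. i + 1 \<le> m}"
  have sub: "?B \<subseteq> {m, m+1} \<union> S"
  proof
    fix i assume i: "i \<in> ?B"
    hence "real i \<le> t + 1" by auto
    hence "i \<le> m + 1" using m1 by linarith
    moreover have "i \<ge> m \<or> i + 1 \<le> m" by linarith
    ultimately show "i \<in> {m, m+1} \<union> S" using i unfolding S_def by auto
  qed
  have S1: "card S \<le> 1"
  proof -
    have "a = b" if a: "a \<in> S" and b: "b \<in> S" for a b
    proof (rule ccontr)
      assume "a \<noteq> b"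
      have key: "False" if x: "x \<in> S" and y: "y \<in> S" and xy: "x < y" for x y
      proof -
        have xK: "K dvd x" and xt: "t < real x + real K" using x m1 unfolding S_def by auto
        have yK: "K dvd y" and ym: "y + 1 \<le> m" using y m1 unfolding S_def by auto
        obtain uu where u: "x = K * uu" using xK by blast
        obtain vv where v: "y = K * vv" using yK by blast
        have "uu < vv" using xy u v by simp
        hence "K * Suc uu \<le> K * vv" by (intro mult_le_mono2) simp
        hence "x + K \<le> y" using u v by simp
        hence "real x + real K \<le> real y" by linarith
        moreover have "real y + 1 \<le> real m" using ym by linarith
        ultimately show False using xt m1 by linarith
      qed
      show False
      proof (cases "a < b")
        case True thus ?thesis using key a b by blast
      next
        case False hence "b < a" using \<open>a \<noteq> b\<close> by simp
        thus ?thesis using key a b by blast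
      qed
    qed
    moreover have "finite S" unfolding S_def by simp
    ultimately have "card S \<le> Suc 0" by (simp add: card_le_Suc0_iff_eq)
    thus ?thesis by simp
  qed
  have fin: "finite ({m, m+1} \<union> S)" by (simp add: S_def)
  have "card ?B \<le> card ({m, m+1} \<union> S)" by (rule card_mono[OF fin sub])
  also have "\<dots> \<le> card {m, m+1} + card S" by (rule card_Un_le)
  also have "\<dots> \<le> 3" using S1 by (simp add: card_insert_if)
  finally show ?thesis .
qed




lemma sched1:
  fixes K p :: nat
  assumes K: "0 < K" and p: "0 < p"
  shows "valid_schedule (p*K) (p*K) (cpar K) (\<lambda>_. 1) p (\<lambda>_. 0) (\<lambda>i. real i - 1)"
    and "peak_mem (p*K) (p*K) (cpar K) (\<lambda>_. 1) (\<lambda>_. 0) (\<lambda>_. 1) (\<lambda>i. real i - 1) \<le> 3"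
proof -
  let ?n = "p*K"
  let ?s = "\<lambda>i::nat. real i - 1"
  show "valid_schedule ?n ?n (cpar K) (\<lambda>_. 1) p (\<lambda>_. 0) ?s"
  proof (rule valid_intro)
    fix i assume "i \<in> {1..?n}" thus "0 \<le> ?s i \<and> (0::nat) < p" using p by auto
  next
    fix i j :: nat assume "i \<noteq> j"
    hence "i + 1 \<le> j \<or> j + 1 \<le> i" by linarith
    thus "?s i + 1 \<le> ?s j \<or> ?s j + 1 \<le> ?s i" by linarith
  next
    fix c assume "c \<in> {1..?n}" "c \<noteq> ?n"
    have "c + 1 \<le> cpar K c" using cpar_gt[OF K, of c] by simp
    thus "?s c + 1 \<le> ?s (cpar K c)" by linarith
  qed
  have mk: "makespan ?n (\<lambda>_. 1) ?s \<le> real ?n"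
    unfolding makespan_def using K p
    by (subst Max_le_iff) (auto simp flip: of_nat_mult)
  have "mem_at ?n ?n (cpar K) (\<lambda>_. 1) (\<lambda>_. 0) (\<lambda>_. 1) ?s t \<le> 3" for t
  proof -
    let ?P = "\<lambda>i. ?s i \<le> t \<and> t < file_end ?n ?n (cpar K) (\<lambda>_. 1) ?s i"
    have "mem_at ?n ?n (cpar K) (\<lambda>_. 1) (\<lambda>_. 0) (\<lambda>_. 1) ?s t = (\<Sum>i\<in>{1..?n}. if ?P i then 1 else 0)"
      unfolding mem_at_def by (intro sum.cong) auto
    also have "\<dots> = real (card {i\<in>{1..?n}. ?P i})"
      by (simp add: sum.If_cases Int_def)
    also have "\<dots> \<le> real (card {i\<in>{1..?n}. real i - 1 \<le> t \<and> (t < real i + 1 \<or> (K dvd i \<and> t < real i + real K))})"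
    proof -
      have "{i\<in>{1..?n}. ?P i} \<subseteq> {i\<in>{1..?n}. real i - 1 \<le> t \<and> (t < real i + 1 \<or> (K dvd i \<and> t < real i + real K))}"
      proof
        fix i assume i: "i \<in> {i\<in>{1..?n}. ?P i}"
        show "i \<in> {i\<in>{1..?n}. real i - 1 \<le> t \<and> (t < real i + 1 \<or> (K dvd i \<and> t < real i + real K))}"
        proof (cases "i = ?n")
          case True
          hence "t < real i + real K" using i mk K by (auto simp: file_end_def)
          moreover have "K dvd i" using True by simp
          ultimately show ?thesis using i by auto
        next
          case False
          hence "t < real (cpar K i)" using i by (simp add: file_end_def)
          thus ?thesis using i by (auto simp: cpar_def split: if_splits)
        qed
      qed
      thus ?thesis by (intro of_nat_mono card_mono) auto
    qed
    also have "\<dots> \<le> 3" using card3[OF K, of ?n t] by simp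
    finally show ?thesis .
  qed
  thus "peak_mem ?n ?n (cpar K) (\<lambda>_. 1) (\<lambda>_. 0) (\<lambda>_. 1) ?s \<le> 3"
    unfolding peak_mem_def by (intro cSUP_least) auto
qed




definition s2 :: "nat \<Rightarrow> nat \<Rightarrow> nat" where
  "s2 K i = (if (i-1) mod K < K-1 then (i-1) mod K else K - 1 + (i-1) div K)"
definition proc2 :: "nat \<Rightarrow> nat \<Rightarrow> nat" where
  "proc2 K i = (if (i-1) mod K < K-1 then (i-1) div K else 0)"

lemma s2_dec:
  fixes K b j :: nat
  assumes "j < K"
  shows "s2 K (b*K+j+1) = (if j < K-1 then j else K-1+b)"
    and "proc2 K (b*K+j+1) = (if j < K-1 then b else 0)"
proof -
  have m: "(b*K+j+1-1) mod K = j" and d: "(b*K+j+1-1) div K = b" using assms by auto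
  show "s2 K (b*K+j+1) = (if j < K-1 then j else K-1+b)" unfolding s2_def m d ..
  show "proc2 K (b*K+j+1) = (if j < K-1 then b else 0)" unfolding proc2_def m d ..
qed

lemma sched2:
  fixes K p :: nat
  assumes K: "2 \<le> K" and p: "0 < p"
  shows "valid_schedule (p*K) (p*K) (cpar K) (\<lambda>_. 1) p (proc2 K) (\<lambda>i. real (s2 K i))"
    and "makespan (p*K) (\<lambda>_. 1) (\<lambda>i. real (s2 K i)) \<le> real (K - 1 + p)"
proof -
  let ?n = "p*K"
  have K0: "0 < K" using K by simp
  show "valid_schedule ?n ?n (cpar K) (\<lambda>_. 1) p (proc2 K) (\<lambda>i. real (s2 K i))"
  proof (rule valid_intro)
    fix i assume "i \<in> {1..?n}"
    then obtain b j where bj: "b < p" "j < K" "i = b*K + j + 1" using decomp[OF _ K0] by blast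
    show "0 \<le> real (s2 K i) \<and> proc2 K i < p" using bj p s2_dec(2)[OF bj(2), of b] by simp
  next
    fix i i' assume i: "i \<in> {1..?n}" and i': "i' \<in> {1..?n}" and ne: "i \<noteq> i'"
      and pr: "proc2 K i = proc2 K i'"
    obtain b j where bj: "b < p" "j < K" "i = b*K + j + 1" using decomp[OF i K0] by blast
    obtain b' j' where bj': "b' < p" "j' < K" "i' = b'*K + j' + 1" using decomp[OF i' K0] by blast
    have "s2 K i \<noteq> s2 K i'"
    proof (cases "j < K - 1")
      case True
      show ?thesis
      proof (cases "j' < K - 1")
        case True
        have "b = b'" using pr \<open>j < K-1\<close> True s2_dec(2)[OF bj(2), of b] s2_dec(2)[OF bj'(2), of b'] bj bj' by simp
        hence "j \<noteq> j'" using ne bj bj' by auto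
        thus ?thesis using \<open>j < K-1\<close> True s2_dec(1)[OF bj(2), of b] s2_dec(1)[OF bj'(2), of b'] bj bj' by simp
      next
        case False
        thus ?thesis using \<open>j < K-1\<close> s2_dec(1)[OF bj(2), of b] s2_dec(1)[OF bj'(2), of b'] bj bj' by simp
      qed
    next
      case False
      show ?thesis
      proof (cases "j' < K - 1")
        case True
        thus ?thesis using False s2_dec(1)[OF bj(2), of b] s2_dec(1)[OF bj'(2), of b'] bj bj' by simp
      next
        case False
        hence "j = j'" using \<open>\<not> j < K-1\<close> bj(2) bj'(2) by simp
        hence "b \<noteq> b'" using ne bj bj' by auto
        thus ?thesis using False \<open>\<not> j < K-1\<close> s2_dec(1)[OF bj(2), of b] s2_dec(1)[OF bj'(2), of b'] bj bj' by simp
      qed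
    qed
    hence "s2 K i + 1 \<le> s2 K i' \<or> s2 K i' + 1 \<le> s2 K i" by linarith
    thus "real (s2 K i) + 1 \<le> real (s2 K i') \<or> real (s2 K i') + 1 \<le> real (s2 K i)" by linarith
  next
    fix c assume c: "c \<in> {1..?n}" "c \<noteq> ?n"
    obtain b j where bj: "b < p" "j < K" "c = b*K + j + 1" using decomp[OF c(1) K0] by blast
    have "s2 K c + 1 \<le> s2 K (cpar K c)"
    proof (cases "j + 1 = K")
      case True
      hence "cpar K c = (b+1)*K + j + 1" using dvd_decomp[OF bj(2), of b] bj by (simp add: cpar_def)
      moreover have "\<not> j < K - 1" using True by simp
      ultimately show ?thesis using s2_dec(1)[OF bj(2), of b] s2_dec(1)[OF bj(2), of "b+1"] bj by simp
    next
      case False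
      hence jK: "j + 1 < K" using bj by simp
      hence "cpar K c = b*K + (j+1) + 1" using dvd_decomp[OF bj(2), of b] bj False by (simp add: cpar_def)
      moreover have "j < K - 1" using jK by linarith
      ultimately show ?thesis using s2_dec(1)[OF bj(2), of b] s2_dec(1)[OF jK, of b] bj by auto
    qed
    thus "real (s2 K c) + 1 \<le> real (s2 K (cpar K c))" by linarith
  qed
  have "s2 K i + 1 \<le> K - 1 + p" if i: "i \<in> {1..?n}" for i
  proof -
    obtain b j where bj: "b < p" "j < K" "i = b*K + j + 1" using decomp[OF i K0] by blast
    thus ?thesis using s2_dec(1)[OF bj(2), of b] K by auto
  qed
  hence "real (s2 K i) + 1 \<le> real (K - 1 + p)" if "i \<in> {1..?n}" for i
    using that by (metis of_nat_1 of_nat_add of_nat_le_iff)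
  thus "makespan ?n (\<lambda>_. 1) (\<lambda>i. real (s2 K i)) \<le> real (K - 1 + p)"
    unfolding makespan_def using K p by (subst Max_le_iff) auto
qed




theorem theorem3:
  fixes p :: nat and \<alpha> \<beta> :: real
  assumes "p \<ge> 2" and "\<alpha> > 0" and "\<beta> > 0"
    and "\<alpha> * \<beta> < 2 * real p / (real_of_int \<lceil>log 2 (real p)\<rceil> + 2)"
  shows "\<exists>n r par. in_tree n r par \<and>
     (\<forall>proc \<sigma>. valid_schedule n r par (\<lambda>_. 1) p proc \<sigma> \<longrightarrow>
        \<not> (makespan n (\<lambda>_. 1) \<sigma> \<le> \<alpha> * opt_makespan n r par (\<lambda>_. 1) p \<and>
           peak_mem n r par (\<lambda>_. 1) (\<lambda>_. 0) (\<lambda>_. 1) \<sigma>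
             \<le> \<beta> * opt_peak_mem n r par (\<lambda>_. 1) (\<lambda>_. 0) (\<lambda>_. 1) p))"
proof -
  have p0: "0 < p" using assms(1) by simp
  define x where "x = \<alpha> * \<beta>"
  have x0: "0 < x" using assms(2,3) by (simp add: x_def)
  have "1 \<le> log 2 (real p)" using assms(1) by simp
  also have "\<dots> \<le> real_of_int \<lceil>log 2 (real p)\<rceil>" by (rule le_of_int_ceiling)
  finally have c1: "1 \<le> real_of_int \<lceil>log 2 (real p)\<rceil>" .
  define c where "c = real_of_int \<lceil>log 2 (real p)\<rceil> + 2"
  have c3: "3 \<le> c" using c1 by (simp add: c_def)
  have c0: "0 < c" using c3 by simp
  have "x < 2 * real p / c" using assms(4) by (simp add: x_def c_def)
  hence "x * c < 2 * real p" using pos_less_divide_eq[OF c0] by simp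
  moreover have "3 * x \<le> x * c" using c3 x0 by simp
  ultimately have x3: "3 * x < 2 * real p" by linarith
  define D where "D = 2 * real p - 3 * x"
  have D0: "0 < D" using x3 by (simp add: D_def)
  obtain N :: nat where N: "(3 * x * real p + 1) / D < real N" using reals_Archimedean2 by blast
  hence "3 * x * real p + 1 < real N * D" using D0 by (simp add: pos_divide_less_eq)
  define K where "K = Suc (Suc N)"
  have K2: "2 \<le> K" by (simp add: K_def)
  have K0: "0 < K" using K2 by simp
  have key: "3 * x * real (K - 1 + p) < 2 * real (p*K) - 1"
  proof -
    have e1: "real (K - 1 + p) = real N + 1 + real p" by (simp add: K_def)
    have e2: "real (p*K) = real p * (real N + 2)" by (simp add: K_def algebra_simps)
    have "3 * x * real p + 1 < real N * D" by fact
    moreover have "0 \<le> D" using D0 by simp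
    ultimately have "3 * x * real p + 1 - 2 * real p < (real N + 1) * D" using D0
      by (simp add: algebra_simps)
    thus ?thesis unfolding e1 e2 D_def by (simp add: algebra_simps)
  qed
  let ?n = "p*K"
  have T: "in_tree ?n ?n (cpar K)" by (rule tree_ok[OF K0 p0])
  have optC: "opt_makespan ?n ?n (cpar K) (\<lambda>_. 1) p \<le> real (K - 1 + p)"
  proof -
    have "opt_makespan ?n ?n (cpar K) (\<lambda>_. 1) p \<le> makespan ?n (\<lambda>_. 1) (\<lambda>i. real (s2 K i))"
      unfolding opt_makespan_def
    proof (rule cInf_lower)
      show "makespan ?n (\<lambda>_. 1) (\<lambda>i. real (s2 K i)) \<in> {makespan ?n (\<lambda>_. 1) \<sigma> |proc \<sigma>. valid_schedule ?n ?n (cpar K) (\<lambda>_. 1) p proc \<sigma>}"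
        using sched2(1)[OF K2 p0] by blast
      show "bdd_below {makespan ?n (\<lambda>_. 1) \<sigma> |proc \<sigma>. valid_schedule ?n ?n (cpar K) (\<lambda>_. 1) p proc \<sigma>}"
        by (rule bdd_belowI[of _ 0]) (use lower(2)[OF T] in blast)
    qed
    thus ?thesis using sched2(2)[OF K2 p0] by linarith
  qed
  have optM: "opt_peak_mem ?n ?n (cpar K) (\<lambda>_. 1) (\<lambda>_. 0) (\<lambda>_. 1) p \<le> 3"
  proof -
    have "opt_peak_mem ?n ?n (cpar K) (\<lambda>_. 1) (\<lambda>_. 0) (\<lambda>_. 1) p \<le> peak_mem ?n ?n (cpar K) (\<lambda>_. 1) (\<lambda>_. 0) (\<lambda>_. 1) (\<lambda>i. real i - 1)"
      unfolding opt_peak_mem_def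
    proof (rule cInf_lower)
      show "peak_mem ?n ?n (cpar K) (\<lambda>_. 1) (\<lambda>_. 0) (\<lambda>_. 1) (\<lambda>i. real i - 1) \<in> {peak_mem ?n ?n (cpar K) (\<lambda>_. 1) (\<lambda>_. 0) (\<lambda>_. 1) \<sigma> |proc \<sigma>. valid_schedule ?n ?n (cpar K) (\<lambda>_. 1) p proc \<sigma>}"
        using sched1(1)[OF K0 p0] by blast
      show "bdd_below {peak_mem ?n ?n (cpar K) (\<lambda>_. 1) (\<lambda>_. 0) (\<lambda>_. 1) \<sigma> |proc \<sigma>. valid_schedule ?n ?n (cpar K) (\<lambda>_. 1) p proc \<sigma>}"
        by (rule bdd_belowI[of _ 0]) (use lower(3)[OF T] in blast)
    qed
    thus ?thesis using sched1(2)[OF K0 p0] by linarith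
  qed
  show ?thesis
  proof (intro exI conjI allI impI notI)
    show "in_tree ?n ?n (cpar K)" by (rule T)
  next
    fix proc \<sigma>
    assume V: "valid_schedule ?n ?n (cpar K) (\<lambda>_. 1) p proc \<sigma>"
      and H: "makespan ?n (\<lambda>_. 1) \<sigma> \<le> \<alpha> * opt_makespan ?n ?n (cpar K) (\<lambda>_. 1) p \<and>
           peak_mem ?n ?n (cpar K) (\<lambda>_. 1) (\<lambda>_. 0) (\<lambda>_. 1) \<sigma>
             \<le> \<beta> * opt_peak_mem ?n ?n (cpar K) (\<lambda>_. 1) (\<lambda>_. 0) (\<lambda>_. 1) p"
    define C where "C = makespan ?n (\<lambda>_. 1) \<sigma>"
    define M where "M = peak_mem ?n ?n (cpar K) (\<lambda>_. 1) (\<lambda>_. 0) (\<lambda>_. 1) \<sigma>"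
    have C1: "C \<le> \<alpha> * real (K - 1 + p)"
    proof -
      have "C \<le> \<alpha> * opt_makespan ?n ?n (cpar K) (\<lambda>_. 1) p" using H unfolding C_def by blast
      also have "\<dots> \<le> \<alpha> * real (K - 1 + p)" using optC assms(2) by (intro mult_left_mono) simp_all
      finally show ?thesis .
    qed
    have M1: "M \<le> \<beta> * 3"
    proof -
      have "M \<le> \<beta> * opt_peak_mem ?n ?n (cpar K) (\<lambda>_. 1) (\<lambda>_. 0) (\<lambda>_. 1) p" using H unfolding M_def by blast
      also have "\<dots> \<le> \<beta> * 3" using optM assms(3) by (intro mult_left_mono) simp_all
      finally show ?thesis .
    qed
    have C0: "0 \<le> C" and M0: "0 \<le> M" using lower(2,3)[OF T V] by (simp_all add: C_def M_def)
    have "2 * real ?n - 1 \<le> M * C" using lower(1)[OF T V] by (simp add: C_def M_def)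
    also have "\<dots> \<le> (\<beta> * 3) * (\<alpha> * real (K - 1 + p))"
      by (rule mult_mono[OF M1 C1]) (use assms(3) C0 in simp_all)
    also have "\<dots> = 3 * x * real (K - 1 + p)" by (simp add: x_def)
    finally show False using key by linarith
  qed
qed


end
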